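(* Let $G$ be an additive group and let $(X,\rho)$ be the $\mathbb R$-tree described below. Then $X$ is similarity homogeneous and not homogeneous. Moreover $X$ is a metric fibration with fibers $F_a=\{(f,a)\in X\}$, $a>0$.
   Context: A function on an interval $(\alpha,\beta)$ is piecewise constant from the left if for every $x$ there is $\varepsilon>0$ with $f$ constant on $[x-\varepsilon,x]$. $X$ is the set of pairs $(f,a_f)$, $a_f>0$ real, $f:(a_f,+\infty)\to G$ piecewise constant from the left with $f|_{(b_f,+\infty)}\equiv0$ for some $b_f\ge a_f$. Order: $(f,a_f)\preceq(g,a_g)$ iff $a_f\le a_g$ and $f|_{(a_g,+\infty)}=g$; any two elements $p,q$ have a supremum $p\vee q$. Metric: $\rho((f,a_f),(g,a_g))=|a_f-a_g|$ if the pairs are comparable, and $\rho(p,q)=\rho(p,p\vee q)+\rho(p\vee q,q)$ otherwise. A similarity with coefficient $k>0$ is a map with $\rho(F(x),F(y))=k\rho(x,y)$; $X$ is similarity homogeneous (resp. homogeneous) if its group of bijective similarities (resp. isometries) acts transitively. Two subsets $F_1,F_2$ are equidistant if for every $x_i\in F_i$ there is $x_j\in F_j$ ($j\ne i$) with $\rho(x_i,x_j)$ equal to the distance between $F_1$ and $F_2$. A metric fibration of $X$ is a partition of $X$ into closed subsets that are mutually isometric (with the induced metric) and pairwise equidistant. *)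

theory Defs
  imports "HOL-Analysis.Analysis" "HOL-Library.Disjoint_Sets"
begin

text \<open>A point of X is a pair (f, a) with a > 0 and f : (a, +inf) -> G.
  Since HOL functions are total, f is represented by a total function
  real => 'g normalised to be 0 outside the domain (a, +inf), i.e. on (-inf, a].\<close>

type_synonym 'g pt = "(real \<Rightarrow> 'g) \<times> real"

definition pc_left :: "real \<Rightarrow> (real \<Rightarrow> 'g) \<Rightarrow> bool" where
  "pc_left a f \<longleftrightarrow> (\<forall>x>a. \<exists>\<epsilon>>0. \<forall>y. a < y \<and> x - \<epsilon> \<le> y \<and> y \<le> x \<longrightarrow> f y = f x)"

definition Xset :: "('g::ab_group_add) pt set" where
  "Xset = {(f, a). 0 < a \<and> pc_left a f \<and> (\<exists>b\<ge>a. \<forall>x>b. f x = 0) \<and> (\<forall>x\<le>a. f x = 0)}"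

definition tle :: "('g::ab_group_add) pt \<Rightarrow> 'g pt \<Rightarrow> bool" where
  "tle p q \<longleftrightarrow> snd p \<le> snd q \<and> (\<forall>x>snd q. fst p x = fst q x)"

definition tsup :: "('g::ab_group_add) pt \<Rightarrow> 'g pt \<Rightarrow> 'g pt" where
  "tsup p q = (THE s. s \<in> Xset \<and> tle p s \<and> tle q s \<and>
                  (\<forall>t\<in>Xset. tle p t \<and> tle q t \<longrightarrow> tle s t))"

definition rho :: "('g::ab_group_add) pt \<Rightarrow> 'g pt \<Rightarrow> real" where
  "rho p q = (if tle p q \<or> tle q p then \<bar>snd p - snd q\<bar>
              else \<bar>snd p - snd (tsup p q)\<bar> + \<bar>snd (tsup p q) - snd q\<bar>)"

definition similarity_homogeneous :: "'a set \<Rightarrow> ('a \<Rightarrow> 'a \<Rightarrow> real) \<Rightarrow> bool" where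
  "similarity_homogeneous M d \<longleftrightarrow>
     (\<forall>p\<in>M. \<forall>q\<in>M. \<exists>F k. k > 0 \<and> bij_betw F M M \<and>
        (\<forall>x\<in>M. \<forall>y\<in>M. d (F x) (F y) = k * d x y) \<and> F p = q)"

definition homogeneous :: "'a set \<Rightarrow> ('a \<Rightarrow> 'a \<Rightarrow> real) \<Rightarrow> bool" where
  "homogeneous M d \<longleftrightarrow>
     (\<forall>p\<in>M. \<forall>q\<in>M. \<exists>F. bij_betw F M M \<and>
        (\<forall>x\<in>M. \<forall>y\<in>M. d (F x) (F y) = d x y) \<and> F p = q)"

definition isometric_sets :: "('a \<Rightarrow> 'a \<Rightarrow> real) \<Rightarrow> 'a set \<Rightarrow> 'a set \<Rightarrow> bool" where
  "isometric_sets d A B \<longleftrightarrow>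
     (\<exists>\<phi>. bij_betw \<phi> A B \<and> (\<forall>x\<in>A. \<forall>y\<in>A. d (\<phi> x) (\<phi> y) = d x y))"

definition set_dist :: "('a \<Rightarrow> 'a \<Rightarrow> real) \<Rightarrow> 'a set \<Rightarrow> 'a set \<Rightarrow> real" where
  "set_dist d A B = Inf {d x y | x y. x \<in> A \<and> y \<in> B}"

definition equidistant :: "('a \<Rightarrow> 'a \<Rightarrow> real) \<Rightarrow> 'a set \<Rightarrow> 'a set \<Rightarrow> bool" where
  "equidistant d A B \<longleftrightarrow>
     (\<forall>x\<in>A. \<exists>y\<in>B. d x y = set_dist d A B) \<and> (\<forall>y\<in>B. \<exists>x\<in>A. d y x = set_dist d A B)"

definition metric_fibration :: "'a set \<Rightarrow> ('a \<Rightarrow> 'a \<Rightarrow> real) \<Rightarrow> 'a set set \<Rightarrow> bool" where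
  "metric_fibration M d P \<longleftrightarrow>
     partition_on M P \<and>
     (\<forall>F\<in>P. closedin (Metric_space.mtopology M d) F) \<and>
     (\<forall>F1\<in>P. \<forall>F2\<in>P. isometric_sets d F1 F2) \<and>
     (\<forall>F1\<in>P. \<forall>F2\<in>P. F1 \<noteq> F2 \<longrightarrow> equidistant d F1 F2)"

end

theory Submission
  imports Defs
begin


lemma Xset_iff: "(f,a) \<in> Xset \<longleftrightarrow> 0 < a \<and> pc_left a f \<and> (\<exists>b\<ge>a. \<forall>x>b. f x = 0) \<and> (\<forall>x\<le>a. f x = 0)"
  by (simp add: Xset_def)

lemma tle_refl: "tle p p" by (simp add: tle_def)

lemma tle_trans: "tle p q \<Longrightarrow> tle q r \<Longrightarrow> tle p r"
  unfolding tle_def by force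

lemma tle_antisym:
  assumes "p \<in> Xset" "q \<in> Xset" "tle p q" "tle q p" shows "p = q"
proof -
  obtain f a where p: "p = (f,a)" by (cases p)
  obtain g b where q: "q = (g,b)" by (cases q)
  have ab: "a = b" using assms(3,4) by (simp add: p q tle_def)
  have "f = g"
  proof
    fix x show "f x = g x"
    proof (cases "x > a")
      case True then show ?thesis using assms(3) ab by (simp add: p q tle_def)
    next
      case False then show ?thesis using assms(1,2) ab by (simp add: p q Xset_def)
    qed
  qed
  then show ?thesis using ab p q by simp
qed

lemma tle_chain: "tle y u \<Longrightarrow> tle y w \<Longrightarrow> snd u \<le> snd w \<Longrightarrow> tle u w"
  unfolding tle_def by force

lemma tle_same_snd: "tle x s \<Longrightarrow> snd x = snd s \<Longrightarrow> tle s x"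
  unfolding tle_def by force

definition is_sup :: "('g::ab_group_add) pt \<Rightarrow> 'g pt \<Rightarrow> 'g pt \<Rightarrow> bool" where
  "is_sup p q s \<longleftrightarrow> s \<in> Xset \<and> tle p s \<and> tle q s \<and> (\<forall>t\<in>Xset. tle p t \<and> tle q t \<longrightarrow> tle s t)"

lemma sup_exists:
  assumes "p \<in> Xset" "q \<in> Xset" shows "\<exists>s. is_sup p q s"
proof -
  obtain f a where p: "p = (f,a)" by (cases p)
  obtain g b where q: "q = (g,b)" by (cases q)
  have pX: "(f,a) \<in> Xset" and qX: "(g,b) \<in> Xset" using assms p q by auto
  then have a0: "0<a" and pf: "pc_left a f" and b0: "0<b"
    unfolding Xset_iff by auto
  obtain bf where bf: "bf \<ge> a" "\<forall>x>bf. f x = 0" using pX unfolding Xset_iff by blast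
  obtain bg where bg: "bg \<ge> b" "\<forall>x>bg. g x = 0" using qX unfolding Xset_iff by blast
  define C where "C = {c. max a b \<le> c \<and> (\<forall>x>c. f x = g x)}"
  define c0 where "c0 = Inf C"
  have ne: "max (max a b) (max bf bg) \<in> C" using bf bg by (auto simp: C_def)
  have bdd: "bdd_below C" unfolding bdd_below_def C_def by auto
  have c0ge: "max a b \<le> c0" unfolding c0_def
    by (rule cInf_greatest) (use ne in \<open>auto simp: C_def\<close>)
  have c0eq: "\<forall>x>c0. f x = g x"
  proof (intro allI impI)
    fix x assume "x > c0"
    have "C \<noteq> {}" using ne by blast
    from cInf_less_iff[OF this bdd] \<open>x > c0\<close> obtain c where "c \<in> C" "c < x"
      unfolding c0_def by blast
    thus "f x = g x" by (auto simp: C_def)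
  qed
  have c0le: "\<forall>d\<in>C. c0 \<le> d" using cInf_lower bdd c0_def by blast
  define s where "s = ((\<lambda>x. if x > c0 then f x else 0), c0)"
  have pcs: "pc_left c0 (\<lambda>x. if x > c0 then f x else 0)"
    unfolding pc_left_def
  proof (intro allI impI)
    fix x assume x: "c0 < x"
    then have "a < x" using c0ge by simp
    then obtain e where e: "e > 0" "\<forall>y. a < y \<and> x - e \<le> y \<and> y \<le> x \<longrightarrow> f y = f x"
      using pf unfolding pc_left_def by blast
    show "\<exists>e>0. \<forall>y. c0 < y \<and> x - e \<le> y \<and> y \<le> x \<longrightarrow>
          (if c0 < y then f y else 0) = (if c0 < x then f x else 0)"
    proof (intro exI[of _ e] conjI allI impI)
      show "0 < e" by (rule e(1))
      fix y assume y: "c0 < y \<and> x - e \<le> y \<and> y \<le> x"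
      then have "a < y" using c0ge by linarith
      then have "f y = f x" using e(2) y by blast
      then show "(if c0 < y then f y else 0) = (if c0 < x then f x else 0)" using x y by simp
    qed
  qed
  have sX: "s \<in> Xset"
    unfolding s_def Xset_iff
  proof (intro conjI)
    show "0 < c0" using c0ge a0 by linarith
    show "pc_left c0 (\<lambda>x. if x > c0 then f x else 0)" by (rule pcs)
    show "\<exists>b\<ge>c0. \<forall>x>b. (if x > c0 then f x else 0) = 0"
      using bf by (intro exI[of _ "max c0 bf"]) auto
    show "\<forall>x\<le>c0. (if x > c0 then f x else 0) = 0" by simp
  qed
  show ?thesis
  proof (intro exI[of _ s])
    show "is_sup p q s" unfolding is_sup_def
    proof (intro conjI ballI impI)
      show "s \<in> Xset" by (rule sX)
      show "tle p s" using c0ge by (auto simp: tle_def p s_def)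
      show "tle q s" using c0ge c0eq by (auto simp: tle_def q s_def)
      fix t assume t: "t \<in> Xset" "tle p t \<and> tle q t"
      obtain h d where td: "t = (h,d)" by (cases t)
      have "d \<in> C" using t by (auto simp: C_def tle_def p q td)
      then have "c0 \<le> d" using c0le by blast
      then show "tle s t" using t by (auto simp: tle_def p q td s_def)
    qed
  qed
qed

lemma sup_unique: "is_sup p q s \<Longrightarrow> is_sup p q s' \<Longrightarrow> s = s'"
  unfolding is_sup_def by (meson tle_antisym)

lemma tsup_alt: "tsup p q = (THE s. is_sup p q s)"
  by (simp add: tsup_def is_sup_def)

lemma tsup_is_sup: assumes "p \<in> Xset" "q \<in> Xset" shows "is_sup p q (tsup p q)"
proof -
  have "\<exists>!s. is_sup p q s" using sup_exists[OF assms] sup_unique by blast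
  then show ?thesis unfolding tsup_alt by (rule theI')
qed

lemma tsup_eq: "p \<in> Xset \<Longrightarrow> q \<in> Xset \<Longrightarrow> is_sup p q s \<Longrightarrow> tsup p q = s"
  using tsup_is_sup sup_unique by blast

lemma tsup_commute: "tsup p q = tsup q p"
proof -
  have "(\<lambda>s. is_sup p q s) = (\<lambda>s. is_sup q p s)"
    by (intro ext) (auto simp: is_sup_def)
  then show ?thesis unfolding tsup_alt by simp
qed

lemma tsup_props:
  assumes "p \<in> Xset" "q \<in> Xset"
  shows "tsup p q \<in> Xset" "tle p (tsup p q)" "tle q (tsup p q)"
    "\<And>t. t \<in> Xset \<Longrightarrow> tle p t \<Longrightarrow> tle q t \<Longrightarrow> tle (tsup p q) t"
  using tsup_is_sup[OF assms] unfolding is_sup_def by auto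

lemma tsup_le: "p \<in> Xset \<Longrightarrow> q \<in> Xset \<Longrightarrow> tle p q \<Longrightarrow> tsup p q = q"
  by (rule tsup_eq) (auto simp: is_sup_def tle_refl)

lemma rho_eq:
  assumes "p \<in> Xset" "q \<in> Xset"
  shows "rho p q = 2 * snd (tsup p q) - snd p - snd q"
proof -
  have u1: "snd p \<le> snd (tsup p q)" and u2: "snd q \<le> snd (tsup p q)"
    using tsup_props(2,3)[OF assms] by (auto simp: tle_def)
  show ?thesis
  proof (cases "tle p q")
    case True
    then have "tsup p q = q" using tsup_le assms by blast
    then show ?thesis using True by (auto simp: rho_def tle_def)
  next
    case F1: False
    show ?thesis
    proof (cases "tle q p")
      case True
      then have "tsup p q = p" using tsup_le assms tsup_commute by metis
      then show ?thesis using True by (auto simp: rho_def tle_def)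
    next
      case False
      then show ?thesis using F1 u1 u2 by (simp add: rho_def)
    qed
  qed
qed

lemma rho_ge:
  assumes "p \<in> Xset" "q \<in> Xset" shows "\<bar>snd p - snd q\<bar> \<le> rho p q"
proof -
  have u1: "snd p \<le> snd (tsup p q)" and u2: "snd q \<le> snd (tsup p q)"
    using tsup_props(2,3)[OF assms] by (auto simp: tle_def)
  then show ?thesis using rho_eq[OF assms] by linarith
qed

lemma rho_commute: "rho p q = rho q p"
  unfolding rho_def tsup_commute[of p q] by (auto simp: abs_minus_commute)

lemma rho_metric: "Metric_space (Xset :: ('g::ab_group_add) pt set) rho"
proof
  fix x y :: "'g pt"
  show "0 \<le> rho x y" by (simp add: rho_def)
  show "rho x y = rho y x" by (rule rho_commute)
  assume x: "x \<in> Xset" and y: "y \<in> Xset"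
  show "rho x y = 0 \<longleftrightarrow> x = y"
  proof
    assume "x = y" then show "rho x y = 0" by (simp add: rho_def tle_refl)
  next
    assume r: "rho x y = 0"
    let ?s = "tsup x y"
    have u1: "snd x \<le> snd ?s" and u2: "snd y \<le> snd ?s"
      using tsup_props(2,3)[OF x y] by (auto simp: tle_def)
    have "snd x = snd ?s" "snd y = snd ?s" using r rho_eq[OF x y] u1 u2 by linarith+
    have "tle ?s x" "tle ?s y"
      using tle_same_snd[OF tsup_props(2)[OF x y] \<open>snd x = snd ?s\<close>]
        tle_same_snd[OF tsup_props(3)[OF x y] \<open>snd y = snd ?s\<close>] by auto
    then have "x = ?s" "y = ?s" using tsup_props(1,2,3)[OF x y] tle_antisym x y by blast+
    then show "x = y" by simp
  qed
next
  fix x y z :: "'g pt"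
  assume x: "x \<in> Xset" and y: "y \<in> Xset" and z: "z \<in> Xset"
  let ?a = "tsup x y" and ?b = "tsup y z" and ?c = "tsup x z"
  have ya: "snd y \<le> snd ?a" using tsup_props(3)[OF x y] by (simp add: tle_def)
  have yb: "snd y \<le> snd ?b" using tsup_props(2)[OF y z] by (simp add: tle_def)
  have key: "snd ?c \<le> max (snd ?a) (snd ?b)"
  proof (cases "snd ?a \<le> snd ?b")
    case True
    then have "tle ?a ?b" using tle_chain tsup_props(3)[OF x y] tsup_props(2)[OF y z] by blast
    then have "tle x ?b" using tle_trans tsup_props(2)[OF x y] by blast
    then have "tle ?c ?b" using tsup_props(4)[OF x z] tsup_props(1,3)[OF y z] by blast
    then have "snd ?c \<le> snd ?b" by (simp add: tle_def)
    then show ?thesis by linarith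
  next
    case False
    then have "tle ?b ?a" using tle_chain tsup_props(3)[OF x y] tsup_props(2)[OF y z] by fastforce
    then have "tle z ?a" using tle_trans tsup_props(3)[OF y z] by blast
    then have "tle ?c ?a" using tsup_props(4)[OF x z] tsup_props(1,2)[OF x y] by blast
    then have "snd ?c \<le> snd ?a" by (simp add: tle_def)
    then show ?thesis by linarith
  qed
  show "rho x z \<le> rho x y + rho y z"
    using rho_eq[OF x z] rho_eq[OF x y] rho_eq[OF y z] key ya yb by linarith
qed



lemma map_rho:
  fixes F :: "('g::ab_group_add) pt \<Rightarrow> 'g pt"
  assumes into: "\<And>x. x \<in> Xset \<Longrightarrow> F x \<in> Xset"
  and ord: "\<And>x y. x \<in> Xset \<Longrightarrow> y \<in> Xset \<Longrightarrow> tle (F x) (F y) \<longleftrightarrow> tle x y"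
  and sn: "\<And>x. x \<in> Xset \<Longrightarrow> snd (F x) = k * snd x + t"
  and up: "\<And>x w. x \<in> Xset \<Longrightarrow> w \<in> Xset \<Longrightarrow> tle (F x) w \<Longrightarrow> w \<in> F ` Xset"
  and x: "x \<in> Xset" and y: "y \<in> Xset"
  shows "rho (F x) (F y) = k * rho x y"
proof -
  let ?s = "tsup x y"
  have sX: "?s \<in> Xset" using tsup_props(1)[OF x y] .
  have "is_sup (F x) (F y) (F ?s)"
    unfolding is_sup_def
  proof (intro conjI ballI impI)
    show "F ?s \<in> Xset" using into sX .
    show "tle (F x) (F ?s)" using ord[OF x sX] tsup_props(2)[OF x y] by blast
    show "tle (F y) (F ?s)" using ord[OF y sX] tsup_props(3)[OF x y] by blast
    fix w assume w: "w \<in> Xset" "tle (F x) w \<and> tle (F y) w"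
    then obtain w' where w': "w' \<in> Xset" "w = F w'" using up[OF x w(1)] by blast
    have "tle x w'" "tle y w'" using w w' ord[OF x w'(1)] ord[OF y w'(1)] by auto
    then have "tle ?s w'" using tsup_props(4)[OF x y w'(1)] by blast
    then show "tle (F ?s) w" using ord[OF sX w'(1)] w' by blast
  qed
  then have e: "tsup (F x) (F y) = F ?s" using tsup_eq into x y by blast
  have "rho (F x) (F y) = 2 * snd (F ?s) - snd (F x) - snd (F y)"
    using rho_eq[OF into[OF x] into[OF y]] e by simp
  also have "\<dots> = k * (2 * snd ?s - snd x - snd y)" using sn x y sX by (simp add: algebra_simps)
  also have "\<dots> = k * rho x y" using rho_eq[OF x y] by simp
  finally show ?thesis .
qed

definition Amap :: "real \<Rightarrow> real \<Rightarrow> ('g::ab_group_add) pt \<Rightarrow> 'g pt" where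
  "Amap k t p = ((\<lambda>x. fst p ((x - t) / k)), k * snd p + t)"

lemma Amap_mem:
  assumes p: "p \<in> Xset" and k: "k > 0" and pos: "k * snd p + t > 0"
  shows "Amap k t p \<in> Xset"
proof -
  obtain h c where pc: "p = (h,c)" by (cases p)
  have hX: "(h,c) \<in> Xset" using p pc by simp
  have ph: "pc_left c h" using hX unfolding Xset_iff by blast
  obtain b where b: "b \<ge> c" "\<forall>x>b. h x = 0" using hX unfolding Xset_iff by blast
  have z: "\<forall>x\<le>c. h x = 0" using hX unfolding Xset_iff by blast
  have pos': "k * c + t > 0" using pos pc by simp
  have pcl: "pc_left (k * c + t) (\<lambda>x. h ((x - t) / k))"
    unfolding pc_left_def
  proof (intro allI impI)
    fix x assume x: "k * c + t < x"
    define z0 where "z0 = (x - t) / k"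
    have "c < z0" using x k unfolding z0_def by (simp add: field_simps)
    then obtain e where e: "e > 0" "\<forall>y. c < y \<and> z0 - e \<le> y \<and> y \<le> z0 \<longrightarrow> h y = h z0"
      using ph unfolding pc_left_def by blast
    show "\<exists>e>0. \<forall>y. k * c + t < y \<and> x - e \<le> y \<and> y \<le> x \<longrightarrow> h ((y - t) / k) = h ((x - t) / k)"
    proof (intro exI[of _ "k * e"] conjI allI impI)
      show "0 < k * e" using k e by simp
      fix y assume y: "k * c + t < y \<and> x - k * e \<le> y \<and> y \<le> x"
      have "c < (y - t) / k" using y k by (simp add: field_simps)
      moreover have "z0 - e \<le> (y - t) / k"
      proof -
        have "(x - k*e - t)/k \<le> (y - t)/k" using y k by (intro divide_right_mono) auto
        moreover have "(x - k*e - t)/k = z0 - e" using k unfolding z0_def by (simp add: field_simps)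
        ultimately show ?thesis by simp
      qed
      moreover have "(y - t) / k \<le> z0" using y k unfolding z0_def by (simp add: divide_right_mono)
      ultimately have "h ((y - t) / k) = h z0" using e(2) by blast
      then show "h ((y - t) / k) = h ((x - t) / k)" unfolding z0_def .
    qed
  qed
  have ev: "\<exists>b'\<ge>k * c + t. \<forall>x>b'. h ((x - t) / k) = 0"
  proof (intro exI[of _ "k * b + t"] conjI allI impI)
    show "k * c + t \<le> k * b + t" using b k by simp
    fix x assume "k * b + t < x"
    then have "b < (x - t) / k" using k by (simp add: field_simps)
    then show "h ((x - t) / k) = 0" using b by blast
  qed
  have zz: "\<forall>x\<le>k * c + t. h ((x - t) / k) = 0"
  proof (intro allI impI)
    fix x assume "x \<le> k * c + t"
    then have "(x - t) / k \<le> c" using k by (simp add: field_simps)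
    then show "h ((x - t) / k) = 0" using z by blast
  qed
  show ?thesis unfolding Amap_def pc fst_conv snd_conv Xset_iff
    using pos' pcl ev zz by blast
qed

lemma Amap_inv: "k > 0 \<Longrightarrow> Amap (1/k) (- t/k) (Amap k t p) = p"
  by (cases p) (simp add: Amap_def field_simps)

lemma Amap_inv2: "k > 0 \<Longrightarrow> Amap k t (Amap (1/k) (- t/k) p) = p"
  by (cases p) (simp add: Amap_def field_simps)

lemma Amap_snd: "snd (Amap k t p) = k * snd p + t" by (simp add: Amap_def)

lemma Amap_tle:
  assumes k: "k > 0" shows "tle (Amap k t p) (Amap k t q) \<longleftrightarrow> tle p q"
proof -
  obtain h c where pc: "p = (h,c)" by (cases p)
  obtain h' c' where qc: "q = (h',c')" by (cases q)
  have s: "k * c + t \<le> k * c' + t \<longleftrightarrow> c \<le> c'" using k by simp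
  have f: "(\<forall>x>k * c' + t. h ((x - t) / k) = h' ((x - t) / k)) \<longleftrightarrow> (\<forall>z>c'. h z = h' z)"
  proof
    assume A: "\<forall>x>k * c' + t. h ((x - t) / k) = h' ((x - t) / k)"
    show "\<forall>z>c'. h z = h' z"
    proof (intro allI impI)
      fix z assume "c' < z"
      then have "k * z + t > k * c' + t" using k by simp
      then have "h ((k * z + t - t) / k) = h' ((k * z + t - t) / k)" using A by blast
      then show "h z = h' z" using k by simp
    qed
  next
    assume B: "\<forall>z>c'. h z = h' z"
    show "\<forall>x>k * c' + t. h ((x - t) / k) = h' ((x - t) / k)"
    proof (intro allI impI)
      fix x assume "k * c' + t < x"
      then have "c' < (x - t) / k" using k by (simp add: field_simps)
      then show "h ((x - t) / k) = h' ((x - t) / k)" using B by blast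
    qed
  qed
  show ?thesis unfolding tle_def Amap_def pc qc fst_conv snd_conv using s f by blast
qed

definition Tmap :: "(real \<Rightarrow> 'g) \<Rightarrow> ('g::ab_group_add) pt \<Rightarrow> 'g pt" where
  "Tmap \<phi> p = ((\<lambda>x. if x > snd p then fst p x + \<phi> x else 0), snd p)"

lemma Tmap_mem:
  assumes p: "p \<in> Xset" and ph: "pc_left 0 \<phi>" and ev: "\<forall>x>B. \<phi> x = 0"
  shows "Tmap \<phi> p \<in> Xset"
proof -
  obtain h c where pc: "p = (h,c)" by (cases p)
  have hX: "(h,c) \<in> Xset" using p pc by simp
  have ph0: "pc_left c h" and c0: "c > 0" using hX unfolding Xset_iff by blast+
  obtain b where b: "b \<ge> c" "\<forall>x>b. h x = 0" using hX unfolding Xset_iff by blast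
  have pcl: "pc_left c (\<lambda>x. if x > c then h x + \<phi> x else 0)"
    unfolding pc_left_def
  proof (intro allI impI)
    fix x assume x: "c < x"
    obtain e1 where e1: "e1 > 0" "\<forall>y. c < y \<and> x - e1 \<le> y \<and> y \<le> x \<longrightarrow> h y = h x"
      using ph0 x unfolding pc_left_def by blast
    obtain e2 where e2: "e2 > 0" "\<forall>y. 0 < y \<and> x - e2 \<le> y \<and> y \<le> x \<longrightarrow> \<phi> y = \<phi> x"
    proof -
      have "0 < x" using x c0 by linarith
      then show ?thesis using ph that unfolding pc_left_def by blast
    qed
    show "\<exists>e>0. \<forall>y. c < y \<and> x - e \<le> y \<and> y \<le> x \<longrightarrow>
      (if c < y then h y + \<phi> y else 0) = (if c < x then h x + \<phi> x else 0)"
    proof (intro exI[of _ "min e1 e2"] conjI allI impI)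
      show "0 < min e1 e2" using e1 e2 by simp
      fix y assume y: "c < y \<and> x - min e1 e2 \<le> y \<and> y \<le> x"
      have "x - e1 \<le> y" "x - e2 \<le> y" "0 < y" using y c0 by linarith+
      then have "h y = h x" "\<phi> y = \<phi> x" using e1(2) e2(2) y by blast+
      then show "(if c < y then h y + \<phi> y else 0) = (if c < x then h x + \<phi> x else 0)"
        using x y by simp
    qed
  qed
  have evs: "\<exists>b'\<ge>c. \<forall>x>b'. (if x > c then h x + \<phi> x else 0) = 0"
  proof (intro exI[of _ "max b B"] conjI allI impI)
    show "c \<le> max b B" using b by simp
    fix x assume "max b B < x"
    then have "h x = 0" "\<phi> x = 0" using b ev by auto
    then show "(if x > c then h x + \<phi> x else 0) = 0" by simp
  qed
  have zz: "\<forall>x\<le>c. (if x > c then h x + \<phi> x else 0) = 0" by simp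
  show ?thesis unfolding Tmap_def pc fst_conv snd_conv Xset_iff
    using c0 pcl evs zz by blast
qed

lemma Tmap_inv:
  assumes "p \<in> Xset" shows "Tmap (\<lambda>x. - \<phi> x) (Tmap \<phi> p) = p"
proof -
  obtain h c where pc: "p = (h,c)" by (cases p)
  have "(h,c) \<in> Xset" using assms pc by simp
  then have z: "\<forall>x\<le>c. h x = 0" unfolding Xset_iff by blast
  have "(\<lambda>x. if x > c then (if x > c then h x + \<phi> x else 0) + - \<phi> x else 0) = h"
  proof
    fix x show "(if x > c then (if x > c then h x + \<phi> x else 0) + - \<phi> x else 0) = h x"
      using z by (cases "x > c") auto
  qed
  then show ?thesis unfolding Tmap_def pc fst_conv snd_conv by simp
qed

lemma Tmap_snd: "snd (Tmap \<phi> p) = snd p" by (simp add: Tmap_def)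

lemma Tmap_tle: "tle (Tmap \<phi> p) (Tmap \<phi> q) \<longleftrightarrow> tle p q"
proof -
  obtain h c where pc: "p = (h,c)" by (cases p)
  obtain h' c' where qc: "q = (h',c')" by (cases q)
  have "c \<le> c' \<Longrightarrow> (\<forall>x>c'. (if x > c then h x + \<phi> x else 0) = (if x > c' then h' x + \<phi> x else 0))
     \<longleftrightarrow> (\<forall>x>c'. h x = h' x)"
  proof -
    assume cc: "c \<le> c'"
    have "\<And>x. x > c' \<Longrightarrow> (if x > c then h x + \<phi> x else 0) = (if x > c' then h' x + \<phi> x else 0)
       \<longleftrightarrow> h x = h' x"
    proof -
      fix x assume "x > c'"
      then have "x > c" using cc by simp
      then show "(if x > c then h x + \<phi> x else 0) = (if x > c' then h' x + \<phi> x else 0)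
       \<longleftrightarrow> h x = h' x" using \<open>x > c'\<close> by simp
    qed
    then show ?thesis by blast
  qed
  then show ?thesis unfolding tle_def Tmap_def pc qc fst_conv snd_conv by blast
qed

lemma pc_left_neg: "pc_left a \<phi> \<Longrightarrow> pc_left a (\<lambda>x. - \<phi> x)"
proof -
  assume A: "pc_left a \<phi>"
  show ?thesis unfolding pc_left_def
  proof (intro allI impI)
    fix x assume "a < x"
    then obtain e where e: "e > 0" "\<forall>y. a < y \<and> x - e \<le> y \<and> y \<le> x \<longrightarrow> \<phi> y = \<phi> x"
      using A unfolding pc_left_def by blast
    show "\<exists>e>0. \<forall>y. a < y \<and> x - e \<le> y \<and> y \<le> x \<longrightarrow> - \<phi> y = - \<phi> x"
    proof (intro exI[of _ e] conjI allI impI)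
      fix y assume "a < y \<and> x - e \<le> y \<and> y \<le> x"
      then have "\<phi> y = \<phi> x" using e(2) by blast
      then show "- \<phi> y = - \<phi> x" by simp
    qed (rule e(1))
  qed
qed



lemma zero_pt: "(a::real) > 0 \<Longrightarrow> ((\<lambda>_. 0::'g::ab_group_add), a) \<in> Xset"
  unfolding Xset_iff pc_left_def by (auto intro: exI[of _ 1] exI[of _ a])

lemma transl_exists:
  fixes f g :: "real \<Rightarrow> 'g::ab_group_add"
  assumes fX: "(f,b) \<in> Xset" and gX: "(g,b) \<in> Xset"
  shows "\<exists>\<phi> B. pc_left 0 \<phi> \<and> (\<forall>x>B. \<phi> x = 0) \<and> Tmap \<phi> (f,b) = (g,b)"
proof -
  define \<phi> where "\<phi> x = (if x > b then g x - f x else 0)" for x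
  have pcf: "pc_left b f" using fX unfolding Xset_iff by blast
  have pcg: "pc_left b g" using gX unfolding Xset_iff by blast
  obtain bf where bf: "bf \<ge> b" "\<forall>x>bf. f x = 0" using fX unfolding Xset_iff by blast
  obtain bg where bg: "bg \<ge> b" "\<forall>x>bg. g x = 0" using gX unfolding Xset_iff by blast
  have zg: "\<forall>x\<le>b. g x = 0" using gX unfolding Xset_iff by blast
  have pc: "pc_left 0 \<phi>"
    unfolding pc_left_def
  proof (intro allI impI)
    fix x :: real assume x0: "0 < x"
    show "\<exists>e>0. \<forall>y. 0 < y \<and> x - e \<le> y \<and> y \<le> x \<longrightarrow> \<phi> y = \<phi> x"
    proof (cases "x > b")
      case False
      show ?thesis
      proof (intro exI[of _ 1] conjI allI impI)
        fix y assume y: "0 < y \<and> x - 1 \<le> y \<and> y \<le> x"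
        then have "\<not> y > b" using False by linarith
        then show "\<phi> y = \<phi> x" using False unfolding \<phi>_def by simp
      qed simp
    next
      case True
      obtain e1 where e1: "e1 > 0" "\<forall>y. b < y \<and> x - e1 \<le> y \<and> y \<le> x \<longrightarrow> f y = f x"
        using pcf True unfolding pc_left_def by blast
      obtain e2 where e2: "e2 > 0" "\<forall>y. b < y \<and> x - e2 \<le> y \<and> y \<le> x \<longrightarrow> g y = g x"
        using pcg True unfolding pc_left_def by blast
      define m where "m = min (min e1 e2) ((x - b)/2)"
      show ?thesis
      proof (intro exI[of _ m] conjI allI impI)
        show "0 < m" using e1 e2 True unfolding m_def by simp
        fix y assume y: "0 < y \<and> x - m \<le> y \<and> y \<le> x"
        have m1: "m \<le> e1" unfolding m_def by (rule min.coboundedI1, rule min.cobounded1)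
        have m2: "m \<le> e2" unfolding m_def by (rule min.coboundedI1, rule min.cobounded2)
        have m3': "m \<le> (x - b)/2" unfolding m_def by (rule min.cobounded2)
        then have m3: "2 * m \<le> x - b" by argo
        note m = m1 m2 m3
        have yy: "x - m \<le> y" "y \<le> x" using y by auto
        have yb: "b < y" "x - e1 \<le> y" "x - e2 \<le> y" "y \<le> x" using yy m True by linarith+
        then have "f y = f x" "g y = g x" using e1(2) e2(2) by blast+
        then show "\<phi> y = \<phi> x" unfolding \<phi>_def using yb True by simp
      qed
    qed
  qed
  have ev: "\<forall>x>max bf bg. \<phi> x = 0"
  proof (intro allI impI)
    fix x assume "max bf bg < x"
    then have "f x = 0" "g x = 0" using bf bg by auto
    then show "\<phi> x = 0" unfolding \<phi>_def by simp
  qed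
  have "Tmap \<phi> (f,b) = (g,b)"
  proof -
    have "(\<lambda>x. if x > b then f x + \<phi> x else 0) = g"
    proof
      fix x show "(if x > b then f x + \<phi> x else 0) = g x"
        using zg unfolding \<phi>_def by (cases "x > b") simp_all
    qed
    then show ?thesis unfolding Tmap_def fst_conv snd_conv by simp
  qed
  then show ?thesis using pc ev by blast
qed

lemma sim_hom: "similarity_homogeneous (Xset :: ('g::ab_group_add) pt set) rho"
  unfolding similarity_homogeneous_def
proof (intro ballI)
  fix p q :: "'g pt" assume p: "p \<in> Xset" and q: "q \<in> Xset"
  have sp: "snd p > 0" and sq: "snd q > 0" using p q by (auto simp: Xset_def)
  define k where "k = snd q / snd p"
  have k: "k > 0" using sp sq unfolding k_def by simp
  have kp: "k * snd p = snd q" using sp unfolding k_def by simp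
  define p' where "p' = Amap k 0 p"
  have p'X: "p' \<in> Xset" unfolding p'_def using Amap_mem[OF p k] kp sq by simp
  have sp': "snd p' = snd q" unfolding p'_def Amap_snd using kp by simp
  have "(fst p', snd q) \<in> Xset" using p'X sp' by (metis prod.collapse)
  moreover have "(fst q, snd q) \<in> Xset" using q by simp
  ultimately obtain \<phi> B where ph: "pc_left 0 \<phi>" and ev: "\<forall>x>B. \<phi> x = 0"
    and tq: "Tmap \<phi> (fst p', snd q) = (fst q, snd q)"
    using transl_exists by blast
  have ph': "pc_left 0 (\<lambda>x. - \<phi> x)" using pc_left_neg[OF ph] .
  have ev': "\<forall>x>B. - \<phi> x = 0" using ev by simp
  define F where "F = (\<lambda>x. Tmap \<phi> (Amap k 0 x))"
  define G where "G = (\<lambda>x. Amap (1/k) (- 0/k) (Tmap (\<lambda>x. - \<phi> x) x))"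
  have AX: "Amap k 0 x \<in> Xset" if "x \<in> Xset" for x
  proof -
    have "snd x > 0" using that by (auto simp: Xset_def)
    then show ?thesis using Amap_mem[OF that k] k by simp
  qed
  have FX: "F x \<in> Xset" if "x \<in> Xset" for x
    unfolding F_def using Tmap_mem[OF AX[OF that] ph ev] .
  have GX: "G x \<in> Xset" if "x \<in> Xset" for x
  proof -
    have T: "Tmap (\<lambda>x. - \<phi> x) x \<in> Xset" using Tmap_mem[OF that ph' ev'] .
    have "snd x > 0" using that by (auto simp: Xset_def)
    then have "(1/k) * snd (Tmap (\<lambda>x. - \<phi> x) x) + - 0/k > 0" using k by (simp add: Tmap_snd)
    then show ?thesis unfolding G_def using Amap_mem[OF T] k by simp
  qed
  have GF: "G (F x) = x" if "x \<in> Xset" for x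
    unfolding F_def G_def using Tmap_inv[OF AX[OF that]] Amap_inv[OF k, of 0] by simp
  have FG: "F (G x) = x" if "x \<in> Xset" for x
  proof -
    have e: "Amap k 0 (Amap (1/k) (- 0/k) y) = y" for y :: "'g pt" using Amap_inv2[OF k] .
    have "F (G x) = Tmap \<phi> (Tmap (\<lambda>x. - \<phi> x) x)" unfolding F_def G_def e ..
    also have "\<dots> = x" using Tmap_inv[OF that, of "\<lambda>x. - \<phi> x"] by simp
    finally show ?thesis .
  qed
  have bij: "bij_betw F Xset Xset"
    by (rule bij_betw_byWitness[where f'=G]) (use GF FG FX GX in auto)
  have iso: "rho (F x) (F y) = k * rho x y" if "x \<in> Xset" "y \<in> Xset" for x y
  proof (rule map_rho[where t=0])
    show "F x \<in> Xset" if "x \<in> Xset" for x using FX that .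
    show "tle (F x) (F y) \<longleftrightarrow> tle x y" for x y unfolding F_def Tmap_tle Amap_tle[OF k] ..
    show "snd (F x) = k * snd x + 0" for x unfolding F_def Tmap_snd Amap_snd by simp
    show "w \<in> F ` Xset" if "w \<in> Xset" for w
      using FG[OF that] GX[OF that] by (metis image_eqI)
  qed (use that in auto)
  have Fp: "F p = q"
  proof -
    have "Amap k 0 p = (fst p', snd q)" using sp' unfolding p'_def by (metis prod.collapse)
    then show ?thesis unfolding F_def using tq by simp
  qed
  show "\<exists>F k. 0 < k \<and> bij_betw F Xset Xset \<and> (\<forall>x\<in>Xset. \<forall>y\<in>Xset. rho (F x) (F y) = k * rho x y) \<and> F p = q"
    using k bij iso Fp by blast
qed



lemma zero_pt': "(a::real) > 0 \<Longrightarrow> ((\<lambda>_. 0::'g::ab_group_add), a) \<in> Xset"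
proof -
  assume a: "a > 0"
  have p: "pc_left a (\<lambda>_. 0::'g)" unfolding pc_left_def
  proof (intro allI impI)
    fix x assume "a < x"
    show "\<exists>e>0. \<forall>y. a < y \<and> x - e \<le> y \<and> y \<le> x \<longrightarrow> (0::'g) = 0"
      by (rule exI[of _ 1]) simp
  qed
  have e: "\<exists>b\<ge>a. \<forall>x>b. (0::'g) = 0" by (rule exI[of _ a]) simp
  show ?thesis unfolding Xset_iff using a p e by simp
qed

lemma bound0:
  fixes u :: "('g::ab_group_add) pt"
  assumes u: "u \<in> Xset" and a0: "a0 > 0" and r: "rho u ((\<lambda>_. 0), a0) = r"
  shows "\<exists>c>0. tle u ((\<lambda>_. 0), c) \<and> 2 * c - snd u = a0 + r"
proof -
  let ?p = "((\<lambda>_. 0::'g), a0)"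
  have pX: "?p \<in> Xset" using zero_pt'[OF a0] .
  let ?s = "tsup u ?p"
  have sX: "?s \<in> Xset" and us: "tle u ?s" and ps: "tle ?p ?s" using tsup_props[OF u pX] by auto
  have "fst ?s = (\<lambda>_. 0)"
  proof
    fix x show "fst ?s x = 0"
    proof (cases "x > snd ?s")
      case True then show ?thesis using ps unfolding tle_def by simp
    next
      case False
      have "(fst ?s, snd ?s) \<in> Xset" using sX by simp
      then have "\<forall>x\<le>snd ?s. fst ?s x = 0" unfolding Xset_iff by blast
      then show ?thesis using False by simp
    qed
  qed
  then have se: "?s = ((\<lambda>_. 0), snd ?s)" by (metis prod.collapse)
  have "snd ?s > 0" using sX by (auto simp: Xset_def)
  moreover have "2 * snd ?s - snd u = a0 + r" using rho_eq[OF u pX] r by simp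
  ultimately show ?thesis using us se by (metis)
qed

lemma boundB:
  assumes "u \<in> Xset" "v \<in> Xset" "w \<in> Xset" "tle u w" "tle v w"
  shows "rho u v \<le> 2 * snd w - snd u - snd v"
proof -
  have "tle (tsup u v) w" using tsup_props(4)[OF assms(1,2,3,4,5)] .
  then have "snd (tsup u v) \<le> snd w" by (simp add: tle_def)
  then show ?thesis using rho_eq[OF assms(1,2)] by linarith
qed

lemma not_hom: "\<not> homogeneous (Xset :: ('g::ab_group_add) pt set) rho"
proof
  assume H: "homogeneous (Xset :: 'g pt set) rho"
  define z where "z = (\<lambda>_::real. 0::'g)"
  have zX: "(z, a) \<in> Xset" if "a > 0" for a using zero_pt'[OF that] unfolding z_def .
  have X1: "(z, 1) \<in> Xset" "(z, 2) \<in> Xset" "(z, 4) \<in> Xset" "(z, 7) \<in> Xset"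
    using zX[of 1] zX[of 2] zX[of 4] zX[of 7] by simp_all
  have "\<exists>F. bij_betw F Xset Xset \<and> (\<forall>x\<in>Xset. \<forall>y\<in>Xset. rho (F x) (F y) = rho x y) \<and> F (z, 4) = (z, 2)"
    using H X1(2,3) unfolding homogeneous_def by blast
  then obtain F where bij: "bij_betw F Xset Xset" and iso: "\<forall>x\<in>Xset. \<forall>y\<in>Xset. rho (F x) (F y) = rho x y"
    and F42: "F (z, 4) = (z, 2)" by blast
  have FX: "F x \<in> Xset" if "x \<in> Xset" for x using bij that bij_betwE by blast
  have t1: "tle (z, 1) (z, 4)" "tle (z, 4) (z, 7)" "tle (z, 1) (z, 7)" unfolding tle_def by simp_all
  have r1: "rho (z, 1) (z, 4) = 3" unfolding rho_def using t1 by simp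
  have r2: "rho (z, 4) (z, 7) = 3" unfolding rho_def using t1 by simp
  have r3: "rho (z, 1) (z, 7) = 6" unfolding rho_def using t1 by simp
  define u where "u = F (z, 1)"
  define v where "v = F (z, 7)"
  have uX: "u \<in> Xset" unfolding u_def using FX X1(1) .
  have vX: "v \<in> Xset" unfolding v_def using FX X1(4) .
  have "rho (F (z, 1)) (F (z, 4)) = rho (z, 1) (z, 4)" using iso X1 by blast
  then have ru: "rho u (z, 2) = 3" unfolding u_def using r1 F42 by simp
  have "rho (F (z, 4)) (F (z, 7)) = rho (z, 4) (z, 7)" using iso X1 by blast
  then have rv': "rho (z, 2) v = 3" unfolding v_def using r2 F42 by simp
  have rv: "rho v (z, 2) = 3" using rv' rho_commute[of v "(z,2)"] by simp
  have "rho (F (z, 1)) (F (z, 7)) = rho (z, 1) (z, 7)" using iso X1 by blast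
  then have ruv: "rho u v = 6" unfolding u_def v_def using r3 by simp
  have two: "(2::real) > 0" by simp
  obtain cu where cu: "cu > 0" "tle u (z, cu)" "2 * cu - snd u = 2 + 3"
    using bound0[OF uX two] ru unfolding z_def by blast
  obtain cv where cv: "cv > 0" "tle v (z, cv)" "2 * cv - snd v = 2 + 3"
    using bound0[OF vX two] rv unfolding z_def by blast
  have su: "snd u > 0" using uX by (cases u) (simp add: Xset_def)
  have sv: "snd v > 0" using vX by (cases v) (simp add: Xset_def)
  show False
  proof (cases "cv \<le> cu")
    case True
    have "tle (z, cv) (z, cu)" unfolding tle_def using True by simp
    then have "tle v (z, cu)" using cv(2) tle_trans by blast
    then have "rho u v \<le> 2 * cu - snd u - snd v" using boundB[OF uX vX zX[OF cu(1)] cu(2)] by simp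
    then show False using ruv cu(3) sv by linarith
  next
    case False
    have "tle (z, cu) (z, cv)" unfolding tle_def using False by simp
    then have "tle u (z, cv)" using cu(2) tle_trans by blast
    then have "rho u v \<le> 2 * cv - snd u - snd v" using boundB[OF uX vX zX[OF cv(1)] _ cv(2)] by simp
    then show False using ruv cv(3) su by linarith
  qed
qed

lemma near:
  assumes x: "x \<in> Xset" and b: "b > 0"
  shows "\<exists>y\<in>Xset. snd y = b \<and> rho x y = \<bar>snd x - b\<bar>"
proof -
  obtain f c where xc: "x = (f,c)" by (cases x)
  have fX: "(f,c) \<in> Xset" using x xc by simp
  have pf: "pc_left c f" and c0: "c > 0" and zf: "\<forall>x\<le>c. f x = 0" using fX unfolding Xset_iff by blast+
  obtain bf where bf: "bf \<ge> c" "\<forall>x>bf. f x = 0" using fX unfolding Xset_iff by blast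
  show ?thesis
  proof (cases "c \<le> b")
    case True
    define y where "y = ((\<lambda>z. if z > b then f z else 0), b)"
    have pcy: "pc_left b (\<lambda>z. if z > b then f z else 0)"
      unfolding pc_left_def
    proof (intro allI impI)
      fix x assume x: "b < x"
      then have "c < x" using True by linarith
      then obtain e where e: "e > 0" "\<forall>y. c < y \<and> x - e \<le> y \<and> y \<le> x \<longrightarrow> f y = f x"
        using pf unfolding pc_left_def by blast
      show "\<exists>e>0. \<forall>y. b < y \<and> x - e \<le> y \<and> y \<le> x \<longrightarrow> (if y > b then f y else 0) = (if x > b then f x else 0)"
      proof (intro exI[of _ e] conjI allI impI)
        fix y assume y: "b < y \<and> x - e \<le> y \<and> y \<le> x"
        then have "c < y" using True by linarith
        then have "f y = f x" using e(2) y by blast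
        then show "(if y > b then f y else 0) = (if x > b then f x else 0)" using x y by simp
      qed (rule e(1))
    qed
    have evy: "\<exists>b'\<ge>b. \<forall>x>b'. (if x > b then f x else 0) = 0"
    proof (intro exI[of _ "max b bf"] conjI allI impI)
      fix x assume "max b bf < x"
      then show "(if x > b then f x else 0) = 0" using bf by simp
    qed simp
    have yX: "y \<in> Xset" unfolding y_def Xset_iff using b pcy evy by simp
    have "tle x y" unfolding tle_def xc y_def using True by simp
    then have r: "rho x y = \<bar>snd x - b\<bar>" unfolding rho_def y_def by simp
    have sy: "snd y = b" unfolding y_def by simp
    show ?thesis using yX r sy by blast
  next
    case False
    define y where "y = (f, b)"
    have pcy: "pc_left b f"
      unfolding pc_left_def
    proof (intro allI impI)
      fix x assume x: "b < x"
      show "\<exists>e>0. \<forall>y. b < y \<and> x - e \<le> y \<and> y \<le> x \<longrightarrow> f y = f x"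
      proof (cases "x \<le> c")
        case True
        show ?thesis
        proof (intro exI[of _ 1] conjI allI impI)
          fix y assume y: "b < y \<and> x - 1 \<le> y \<and> y \<le> x"
          then show "f y = f x" using zf True by simp
        qed simp
      next
        case xc': False
        then have "c < x" by linarith
        then obtain e where e: "e > 0" "\<forall>y. c < y \<and> x - e \<le> y \<and> y \<le> x \<longrightarrow> f y = f x"
          using pf unfolding pc_left_def by blast
        define m where "m = min e ((x - c)/2)"
        show ?thesis
        proof (intro exI[of _ m] conjI allI impI)
          show "0 < m" using e xc' unfolding m_def by simp
          fix y assume y: "b < y \<and> x - m \<le> y \<and> y \<le> x"
          have m1: "m \<le> e" unfolding m_def by (rule min.cobounded1)
          have m2': "m \<le> (x - c)/2" unfolding m_def by (rule min.cobounded2)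
          then have m2: "2 * m \<le> x - c" by argo
          have yy: "x - m \<le> y" using y by auto
          have "c < y" "x - e \<le> y" using yy m1 m2 xc' by linarith+
          then show "f y = f x" using e(2) y by blast
        qed
      qed
    qed
    have evy: "\<exists>b'\<ge>b. \<forall>x>b'. f x = 0"
      using bf False by (intro exI[of _ bf]) auto
    have zy: "\<forall>x\<le>b. f x = 0" using zf False by auto
    have yX: "y \<in> Xset" unfolding y_def Xset_iff using b pcy evy zy by blast
    have "tle y x" unfolding tle_def xc y_def using False by simp
    then have r: "rho x y = \<bar>snd x - b\<bar>" unfolding rho_def y_def by (simp add: abs_minus_commute)
    have sy: "snd y = b" unfolding y_def by simp
    show ?thesis using yX r sy by blast
  qed
qed



lemma Amap1_inv: "Amap 1 (- t) (Amap 1 t p) = p" "Amap 1 t (Amap 1 (- t) p) = p"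
  by (cases p, simp add: Amap_def)+

lemma fiber_iso_le:
  assumes a: "0 < a" and ab: "a \<le> b"
  shows "isometric_sets rho {p \<in> (Xset :: ('g::ab_group_add) pt set). snd p = a} {p \<in> Xset. snd p = b}"
proof -
  define t where "t = b - a"
  have t: "t \<ge> 0" using ab unfolding t_def by simp
  define F :: "'g pt \<Rightarrow> 'g pt" where "F = Amap 1 t"
  define G :: "'g pt \<Rightarrow> 'g pt" where "G = Amap 1 (- t)"
  have FX: "F x \<in> Xset" if "x \<in> Xset" for x
  proof -
    have "snd x > 0" using that by (auto simp: Xset_def)
    then show ?thesis unfolding F_def using Amap_mem[OF that, of 1 t] t by simp
  qed
  have GX: "G x \<in> Xset" if "x \<in> Xset" "snd x > t" for x
    unfolding G_def using Amap_mem[OF that(1), of 1 "- t"] that(2) by simp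
  have iso: "rho (F x) (F y) = 1 * rho x y" if "x \<in> Xset" "y \<in> Xset" for x y
  proof (rule map_rho[where t=t])
    show "F x \<in> Xset" if "x \<in> Xset" for x using FX that .
    show "tle (F x) (F y) \<longleftrightarrow> tle x y" for x y unfolding F_def using Amap_tle[of 1 t x y] by simp
    show "snd (F x) = 1 * snd x + t" for x unfolding F_def Amap_snd by simp
    show "w \<in> F ` Xset" if "x \<in> Xset" "w \<in> Xset" "tle (F x) w" for x w
    proof -
      have "snd x > 0" using that(1) by (auto simp: Xset_def)
      moreover have "snd (F x) \<le> snd w" using that(3) by (simp add: tle_def)
      ultimately have "snd w > t" unfolding F_def Amap_snd by simp
      then have "G w \<in> Xset" using GX that(2) by blast
      moreover have "F (G w) = w" unfolding F_def G_def using Amap1_inv(2) .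
      ultimately show ?thesis by (metis image_eqI)
    qed
  qed (use that in auto)
  have bij: "bij_betw F {p \<in> Xset. snd p = a} {p \<in> Xset. snd p = b}"
  proof (rule bij_betw_byWitness[where f'=G])
    show "\<forall>x\<in>{p \<in> Xset. snd p = a}. G (F x) = x" unfolding F_def G_def using Amap1_inv(1) by blast
    show "\<forall>x\<in>{p \<in> Xset. snd p = b}. F (G x) = x" unfolding F_def G_def using Amap1_inv(2) by blast
    show "F ` {p \<in> Xset. snd p = a} \<subseteq> {p \<in> Xset. snd p = b}"
    proof
      fix y assume "y \<in> F ` {p \<in> Xset. snd p = a}"
      then obtain x where x: "x \<in> Xset" "snd x = a" "y = F x" by blast
      have "snd (F x) = b" unfolding F_def Amap_snd using x t_def by simp
      then show "y \<in> {p \<in> Xset. snd p = b}" using FX[OF x(1)] x(3) by simp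
    qed
    show "G ` {p \<in> Xset. snd p = b} \<subseteq> {p \<in> Xset. snd p = a}"
    proof
      fix y assume "y \<in> G ` {p \<in> Xset. snd p = b}"
      then obtain x where x: "x \<in> Xset" "snd x = b" "y = G x" by blast
      have "snd x > t" using x a t_def by simp
      then have "G x \<in> Xset" using GX x(1) by blast
      moreover have "snd (G x) = a" unfolding G_def Amap_snd using x t_def by simp
      ultimately show "y \<in> {p \<in> Xset. snd p = a}" using x(3) by simp
    qed
  qed
  show ?thesis unfolding isometric_sets_def
    using bij iso by (intro exI[of _ F]) auto
qed

lemma iso_sym:
  assumes "isometric_sets d A B" shows "isometric_sets d B A"
proof -
  obtain \<phi> where b: "bij_betw \<phi> A B" and i: "\<forall>x\<in>A. \<forall>y\<in>A. d (\<phi> x) (\<phi> y) = d x y"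
    using assms unfolding isometric_sets_def by blast
  define \<psi> where "\<psi> = the_inv_into A \<phi>"
  have b2: "bij_betw \<psi> B A" unfolding \<psi>_def using bij_betw_the_inv_into[OF b] .
  have "d (\<psi> x) (\<psi> y) = d x y" if "x \<in> B" "y \<in> B" for x y
  proof -
    have "\<psi> x \<in> A" "\<psi> y \<in> A" using b2 that bij_betwE by blast+
    moreover have "\<phi> (\<psi> x) = x" "\<phi> (\<psi> y) = y"
      unfolding \<psi>_def using f_the_inv_into_f_bij_betw[OF b] that by auto
    ultimately show ?thesis using i by metis
  qed
  then show ?thesis unfolding isometric_sets_def using b2 by blast
qed

lemma set_dist_fib:
  assumes a: "a > 0" and b: "b > 0"
  shows "set_dist rho {p \<in> (Xset :: ('g::ab_group_add) pt set). snd p = a} {p \<in> Xset. snd p = b} = \<bar>a - b\<bar>"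
proof -
  let ?S = "{rho x y |x y. x \<in> {p \<in> (Xset :: 'g pt set). snd p = a} \<and> y \<in> {p \<in> Xset. snd p = b}}"
  have zX: "((\<lambda>_. 0::'g), a) \<in> Xset" using zero_pt'[OF a] .
  obtain y where y: "y \<in> Xset" "snd y = b" "rho ((\<lambda>_. 0::'g), a) y = \<bar>a - b\<bar>"
    using near[OF zX b] by auto
  have mem: "\<bar>a - b\<bar> \<in> ?S" unfolding mem_Collect_eq
    using zX y by (intro exI[of _ "((\<lambda>_. 0::'g), a)"] exI[of _ y]) simp
  have low: "\<forall>s\<in>?S. \<bar>a - b\<bar> \<le> s"
  proof
    fix s assume "s \<in> ?S"
    then obtain x y where xy: "s = rho x y" "x \<in> {p \<in> (Xset :: 'g pt set). snd p = a}" "y \<in> {p \<in> (Xset :: 'g pt set). snd p = b}"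
      by blast
    then have "x \<in> Xset" "snd x = a" "y \<in> Xset" "snd y = b" "s = rho x y" by auto
    then show "\<bar>a - b\<bar> \<le> s" using rho_ge by metis
  qed
  show ?thesis unfolding set_dist_def using cInf_eq_minimum[OF mem] low by blast
qed

lemma fibration:
  "metric_fibration (Xset :: ('g::ab_group_add) pt set) rho {{p \<in> (Xset :: 'g pt set). snd p = a} | a. a > 0}"
proof -
  let ?P = "{{p \<in> (Xset :: 'g pt set). snd p = a} | a. a > 0}"
  interpret M: Metric_space "Xset :: 'g pt set" rho by (rule rho_metric)
  have part: "partition_on Xset ?P"
    unfolding partition_on_def disjoint_def
  proof (intro conjI ballI impI)
    show "\<Union> ?P = Xset"
    proof
      show "\<Union> ?P \<subseteq> Xset" by blast
      show "Xset \<subseteq> \<Union> ?P"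
      proof
        fix x :: "'g pt" assume x: "x \<in> Xset"
        then have "snd x > 0" by (auto simp: Xset_def)
        then have "{p \<in> Xset. snd p = snd x} \<in> ?P" by blast
        then show "x \<in> \<Union> ?P" using x by blast
      qed
    qed
    show "{} \<notin> ?P"
    proof
      assume "{} \<in> ?P"
      then obtain a where a: "a > 0" "{} = {p \<in> (Xset :: 'g pt set). snd p = a}" by blast
      have "((\<lambda>_. 0::'g), a) \<in> {p \<in> (Xset :: 'g pt set). snd p = a}" using zero_pt'[OF a(1)] by simp
      then show False using a(2) by blast
    qed
    fix A B assume A: "A \<in> ?P" and B: "B \<in> ?P" and AB: "A \<noteq> B"
    obtain a where a: "A = {p \<in> (Xset :: 'g pt set). snd p = a}" using A by blast
    obtain b where b: "B = {p \<in> (Xset :: 'g pt set). snd p = b}" using B by blast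
    have "a \<noteq> b" using a b AB by blast
    then show "A \<inter> B = {}" using a b by blast
  qed
  have closed: "closedin (Metric_space.mtopology Xset rho) F" if "F \<in> ?P" for F
  proof -
    obtain a where a: "a > 0" "F = {p \<in> (Xset :: 'g pt set). snd p = a}" using \<open>F \<in> ?P\<close> by blast
    show ?thesis unfolding M.closedin_metric
    proof (intro conjI allI impI)
      show "F \<subseteq> Xset" using a by blast
      fix x assume x: "x \<in> Xset - F"
      then have r: "\<bar>snd x - a\<bar> > 0" using a by auto
      have "disjnt F (M.mball x \<bar>snd x - a\<bar>)"
        unfolding disjnt_def
      proof (rule ccontr)
        assume "F \<inter> M.mball x \<bar>snd x - a\<bar> \<noteq> {}"
        then obtain y where y: "y \<in> F" "y \<in> M.mball x \<bar>snd x - a\<bar>" by blast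
        then have "rho x y < \<bar>snd x - a\<bar>" "y \<in> Xset" "snd y = a" using a by auto
        then show False using rho_ge[of x y] x by auto
      qed
      then show "\<exists>r>0. disjnt F (M.mball x r)" using r by blast
    qed
  qed
  have iso: "isometric_sets rho A B" if "A \<in> ?P" "B \<in> ?P" for A B
  proof -
    obtain a where a: "a > 0" "A = {p \<in> (Xset :: 'g pt set). snd p = a}" using \<open>A \<in> ?P\<close> by blast
    obtain b where b: "b > 0" "B = {p \<in> (Xset :: 'g pt set). snd p = b}" using \<open>B \<in> ?P\<close> by blast
    show ?thesis
    proof (cases "a \<le> b")
      case True then show ?thesis using fiber_iso_le[OF a(1) True] a b by simp
    next
      case False
      then have "isometric_sets rho B A" using fiber_iso_le[OF b(1), of a] a b by simp
      then show ?thesis by (rule iso_sym)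
    qed
  qed
  have eq: "equidistant rho A B" if "A \<in> ?P" "B \<in> ?P" for A B
  proof -
    obtain a where a: "a > 0" "A = {p \<in> (Xset :: 'g pt set). snd p = a}" using \<open>A \<in> ?P\<close> by blast
    obtain b where b: "b > 0" "B = {p \<in> (Xset :: 'g pt set). snd p = b}" using \<open>B \<in> ?P\<close> by blast
    have sd: "set_dist rho A B = \<bar>a - b\<bar>" using set_dist_fib[OF a(1) b(1)] a b by simp
    show ?thesis unfolding equidistant_def sd
    proof (intro conjI ballI)
      fix x assume "x \<in> A"
      then have x: "x \<in> Xset" "snd x = a" using a by auto
      obtain y where y: "y \<in> Xset" "snd y = b" "rho x y = \<bar>snd x - b\<bar>" using near[OF x(1) b(1)] by blast
      have "y \<in> B" using y b by simp
      moreover have "rho x y = \<bar>a - b\<bar>" using y x by simp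
      ultimately show "\<exists>y\<in>B. rho x y = \<bar>a - b\<bar>" by blast
    next
      fix y assume "y \<in> B"
      then have y: "y \<in> Xset" "snd y = b" using b by auto
      obtain x where x: "x \<in> Xset" "snd x = a" "rho y x = \<bar>snd y - a\<bar>" using near[OF y(1) a(1)] by blast
      have "x \<in> A" using x a by simp
      moreover have "rho y x = \<bar>a - b\<bar>" using y x by (simp add: abs_minus_commute)
      ultimately show "\<exists>x\<in>A. rho y x = \<bar>a - b\<bar>" by blast
    qed
  qed
  show ?thesis unfolding metric_fibration_def using part closed iso eq by blast
qed


theorem theorem4:
  shows "similarity_homogeneous (Xset :: ('g::ab_group_add) pt set) rho
       \<and> \<not> homogeneous (Xset :: 'g pt set) rho
       \<and> metric_fibration (Xset :: 'g pt set) rho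
           {{p \<in> (Xset :: 'g pt set). snd p = a} | a. a > 0}"
  using sim_hom not_hom fibration by blast

end
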